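(* Let $X$ be a real Banach space. Consider: (1) $X$ is LUR. (2) $d(Q_{S_X}(x,\frac1n),Q_{S_X}(x',\frac1n))\to\|x-x'\|$ for every $x,x'\in S_X$. (3) $d(Q_{S_X}(x,\frac1n),Q_{S_X}(-x,\frac1n))\to2$ for every $x\in S_X$. Then $(1)\Rightarrow(2)\Rightarrow(3)$.
   Context: $B_X,S_X$ are the closed unit ball and unit sphere of $X$. For non-empty bounded $F$, $x\in X$, $\delta\ge0$: $r(F,x)=\sup_{y\in F}\|x-y\|$, $Q_F(x,\delta)=\{y\in F:\|x-y\|\ge r(F,x)-\delta\}$. For non-empty sets $A,B$, $d(A,B)=\inf\{\|a-b\|:a\in A,b\in B\}$. $X$ is LUR if $x_n\to x$ whenever $x\in S_X$, $(x_n)\subseteq S_X$ and $\|\frac{x_n+x}{2}\|\to1$. *)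

theory Defs
  imports "HOL-Analysis.Analysis"
begin

definition farthest_radius :: "'a::real_normed_vector set \<Rightarrow> 'a \<Rightarrow> real" where
  "farthest_radius F x = (SUP y\<in>F. norm (x - y))"

definition Qset :: "'a::real_normed_vector set \<Rightarrow> 'a \<Rightarrow> real \<Rightarrow> 'a set" where
  "Qset F x \<delta> = {y \<in> F. norm (x - y) \<ge> farthest_radius F x - \<delta>}"

definition set_dist :: "'a::real_normed_vector set \<Rightarrow> 'a set \<Rightarrow> real" where
  "set_dist A B = Inf {norm (a - b) | a b. a \<in> A \<and> b \<in> B}"

definition LUR :: "'a::real_normed_vector itself \<Rightarrow> bool" where
  "LUR _ \<longleftrightarrow> (\<forall>x::'a. \<forall>xs::nat \<Rightarrow> 'a.
      x \<in> sphere 0 1 \<longrightarrow> (\<forall>n. xs n \<in> sphere 0 1) \<longrightarrow>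
      (\<lambda>n. norm ((xs n + x) /\<^sub>R 2)) \<longlonglongrightarrow> 1 \<longrightarrow> xs \<longlonglongrightarrow> x)"

end

theory Submission
  imports Defs
begin

lemma norm_dbl:
  fixes x :: "'a::real_normed_vector"
  assumes "norm x = 1" shows "norm (x + x) = 2"
proof -
  have "x + x = 2 *\<^sub>R x" by (simp add: scaleR_2)
  then show ?thesis using assms by simp
qed

lemma fr_sphere:
  fixes x :: "'a::real_normed_vector"
  assumes "x \<in> sphere 0 1"
  shows "farthest_radius (sphere 0 1) x = 2"
proof -
  have ne: "sphere (0::'a) 1 \<noteq> {}" using assms by blast
  have ub: "norm (x - y) \<le> 2" if "y \<in> sphere 0 1" for y
    using that assms norm_triangle_ineq4[of x y] by simp
  have "-x \<in> sphere 0 1" using assms by simp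
  moreover have "norm (x - (-x)) = 2" using assms norm_dbl by simp
  ultimately have "(SUP y\<in>sphere 0 1. norm (x - y)) \<ge> 2"
    using ub by (metis (no_types, lifting) bdd_aboveI2 cSUP_upper)
  moreover have "(SUP y\<in>sphere 0 1. norm (x - y)) \<le> 2"
    using ub ne by (intro cSUP_least) auto
  ultimately show ?thesis unfolding farthest_radius_def by simp
qed

lemma LUR_eps:
  fixes X :: "'a::real_normed_vector itself" and x :: 'a
  assumes L: "LUR X" and x: "x \<in> sphere 0 1" and e: "e > 0"
  shows "\<exists>d>0. \<forall>z\<in>sphere 0 1. norm ((z + x) /\<^sub>R 2) \<ge> 1 - d \<longrightarrow> norm (z - x) < e"
proof (rule ccontr)
  assume neg: "\<not> ?thesis"
  have "\<forall>n::nat. \<exists>z. z \<in> sphere 0 1 \<and> norm ((z + x) /\<^sub>R 2) \<ge> 1 - 1/(real n + 1) \<and> norm (z - x) \<ge> e"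
  proof (intro allI)
    fix n :: nat
    have "1/(real n + 1) > 0" by simp
    then show "\<exists>z. z \<in> sphere 0 1 \<and> norm ((z + x) /\<^sub>R 2) \<ge> 1 - 1/(real n + 1) \<and> norm (z - x) \<ge> e"
    proof -
      from neg have "\<forall>d>0. \<exists>z\<in>sphere 0 1. norm ((z + x) /\<^sub>R 2) \<ge> 1 - d \<and> \<not> norm (z - x) < e"
        by blast
      then obtain z where "z\<in>sphere 0 1" "norm ((z + x) /\<^sub>R 2) \<ge> 1 - 1/(real n + 1)" "\<not> norm (z - x) < e"
        using \<open>1/(real n + 1) > 0\<close> by blast
      then show ?thesis by (intro exI[of _ z]) simp
    qed
  qed
  then obtain zs where zs: "\<And>n. zs n \<in> sphere 0 1"
    "\<And>n. norm ((zs n + x) /\<^sub>R 2) \<ge> 1 - 1/(real n + 1)" "\<And>n. norm (zs n - x) \<ge> e"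
    by metis
  have up: "norm ((zs n + x) /\<^sub>R 2) \<le> 1" for n
  proof -
    have "norm (zs n + x) \<le> 2" using norm_triangle_ineq[of "zs n" x] zs(1)[of n] x by simp
    then show ?thesis by simp
  qed
  have lim1: "(\<lambda>n. 1 - 1/(real n + 1)) \<longlonglongrightarrow> 1"
    using tendsto_diff[OF tendsto_const LIMSEQ_inverse_real_of_nat_add[of 0]]
    by (simp add: inverse_eq_divide add.commute)
  have lo: "\<forall>n. 1 - 1/(real n + 1) \<le> norm ((zs n + x) /\<^sub>R 2)" using zs(2) by blast
  have hi: "\<forall>n. norm ((zs n + x) /\<^sub>R 2) \<le> 1" using up by blast
  have "(\<lambda>n. norm ((zs n + x) /\<^sub>R 2)) \<longlonglongrightarrow> 1"
    by (rule real_tendsto_sandwich[OF always_eventually[OF lo] always_eventually[OF hi] lim1 tendsto_const])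
  with L x zs(1) have "zs \<longlonglongrightarrow> x" unfolding LUR_def by blast
  then have "(\<lambda>n. zs n - x) \<longlonglongrightarrow> 0" by (simp add: LIM_zero)
  from LIMSEQ_D[OF this e] obtain no where "\<forall>n\<ge>no. norm (zs n - x - 0) < e" by (elim exE)
  then have "norm (zs no - x - 0) < e" by simp
  with zs(3)[of no] show False by simp
qed

lemma Q_prop:
  fixes x y :: "'a::real_normed_vector"
  assumes "x \<in> sphere 0 1" "y \<in> Qset (sphere 0 1) x t"
  shows "y \<in> sphere 0 1" "norm (x - y) \<ge> 2 - t"
  using assms fr_sphere[OF assms(1)] unfolding Qset_def by auto

lemma negQ:
  fixes x :: "'a::real_normed_vector"
  assumes "x \<in> sphere 0 1" "t \<ge> 0"
  shows "-x \<in> Qset (sphere 0 1) x t"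
  using assms fr_sphere[OF assms(1)] norm_dbl[of x] unfolding Qset_def
  by simp

lemma part1:
  fixes X :: "'a::banach itself"
  assumes L: "LUR X" and x: "(x::'a) \<in> sphere 0 1" and x': "x' \<in> sphere 0 1"
  shows "(\<lambda>n. set_dist (Qset (sphere 0 1) x (1 / real n)) (Qset (sphere 0 1) x' (1 / real n)))
               \<longlonglongrightarrow> norm (x - x')"
proof (rule LIMSEQ_I)
  fix r :: real assume r: "r > 0"
  have r4: "r/4 > 0" using r by simp
  obtain d1 where d1p: "d1 > 0" and d1h: "\<forall>z\<in>sphere 0 1. norm ((z + x) /\<^sub>R 2) \<ge> 1 - d1 \<longrightarrow> norm (z - x) < r/4"
    using LUR_eps[OF L x r4] by blast
  obtain d2 where d2p: "d2 > 0" and d2h: "\<forall>z\<in>sphere 0 1. norm ((z + x') /\<^sub>R 2) \<ge> 1 - d2 \<longrightarrow> norm (z - x') < r/4"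
    using LUR_eps[OF L x' r4] by blast
  have d1: "d1 > 0" "\<And>z. z\<in>sphere 0 1 \<Longrightarrow> norm ((z + x) /\<^sub>R 2) \<ge> 1 - d1 \<Longrightarrow> norm (z - x) < r/4"
    using d1p d1h by simp_all
  have d2: "d2 > 0" "\<And>z. z\<in>sphere 0 1 \<Longrightarrow> norm ((z + x') /\<^sub>R 2) \<ge> 1 - d2 \<Longrightarrow> norm (z - x') < r/4"
    using d2p d2h by simp_all
  define d where "d = min d1 d2"
  have d: "d > 0" "d \<le> d1" "d \<le> d2" using d1p d2p unfolding d_def by simp_all
  obtain m :: nat where m: "inverse (real (Suc m)) < d" using reals_Archimedean[OF d(1)] by (elim exE)
  define N where "N = Suc m"
  have N: "N > 0" "1 / real N < d" using m by (auto simp: N_def inverse_eq_divide)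
  show "\<exists>no. \<forall>n\<ge>no. norm (set_dist (Qset (sphere 0 1) x (1 / real n)) (Qset (sphere 0 1) x' (1 / real n)) - norm (x - x')) < r"
  proof (intro exI[of _ N] allI impI)
    fix n assume n: "N \<le> n"
    have npos: "real n > 0" using n N by simp
    have "1 / real n \<le> 1 / real N"
      using N n by (intro divide_left_mono) auto
    then have tn: "1 / real n < d" using N by linarith
    let ?A = "Qset (sphere 0 1) x (1 / real n)"
    let ?B = "Qset (sphere 0 1) x' (1 / real n)"
    let ?S = "{norm (a - b) | a b. a \<in> ?A \<and> b \<in> ?B}"
    have inS: "norm (x - x') \<in> ?S"
    proof -
      have "-x \<in> ?A" "-x' \<in> ?B" using negQ[OF x, of "1/real n"] negQ[OF x', of "1/real n"] npos by auto
      moreover have "-x - -x' = -(x - x')" by simp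
      then have "norm (-x - -x') = norm (x - x')" by (simp only: norm_minus_cancel)
      ultimately show ?thesis
        by (intro CollectI exI[of _ "-x"] exI[of _ "-x'"] conjI) simp_all
    qed
    have bdd: "bdd_below ?S" by (rule bdd_belowI[of _ 0]) auto
    have le: "set_dist ?A ?B \<le> norm (x - x')"
      unfolding set_dist_def using cInf_lower[OF inS bdd] .
    have key: "norm (a - b) \<ge> norm (x - x') - r/2" if a: "a \<in> ?A" and b: "b \<in> ?B" for a b
    proof -
      have as: "a \<in> sphere 0 1" and an: "norm (x - a) \<ge> 2 - 1/real n" using Q_prop[OF x a] by auto
      have bs: "b \<in> sphere 0 1" and bn: "norm (x' - b) \<ge> 2 - 1/real n" using Q_prop[OF x' b] by auto
      have "-a + x = x - a" by simp
      then have "norm ((-a + x) /\<^sub>R 2) = norm (x - a) / 2" by simp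
      then have "norm ((-a + x) /\<^sub>R 2) \<ge> 1 - d1" using an tn d by linarith
      then have ha: "norm (-a - x) < r/4" using d1(2)[of "-a"] as by simp
      have "-b + x' = x' - b" by simp
      then have "norm ((-b + x') /\<^sub>R 2) = norm (x' - b) / 2" by simp
      then have "norm ((-b + x') /\<^sub>R 2) \<ge> 1 - d2" using bn tn d by linarith
      then have hb: "norm (-b - x') < r/4" using d2(2)[of "-b"] bs by simp
      have "-a - x = -(x + a)" by simp
      then have ha': "norm (x + a) < r/4" using ha by (simp only: norm_minus_cancel)
      have "-b - x' = -(b + x')" by simp
      then have hb': "norm (b + x') < r/4" using hb by (simp only: norm_minus_cancel)
      have eq: "x - x' = (x + a) - (a - b) - (b + x')" by (simp add: algebra_simps)
      have "norm (x - x') = norm ((x + a) - (a - b) - (b + x'))" by (simp only: eq)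
      moreover have "norm ((x + a) - (a - b) - (b + x')) \<le> norm ((x + a) - (a - b)) + norm (b + x')"
        by (rule norm_triangle_ineq4)
      moreover have "norm ((x + a) - (a - b)) \<le> norm (x + a) + norm (a - b)"
        by (rule norm_triangle_ineq4)
      ultimately have "norm (x - x') \<le> norm (x + a) + norm (a - b) + norm (b + x')"
        by linarith
      then show ?thesis using ha' hb' by linarith
    qed
    have ge: "set_dist ?A ?B \<ge> norm (x - x') - r/2"
      unfolding set_dist_def
    proof (rule cInf_greatest)
      show "?S \<noteq> {}" using inS by blast
    next
      fix v assume "v \<in> ?S"
      then obtain a b where "v = norm (a - b)" "a \<in> ?A" "b \<in> ?B" by blast
      then show "norm (x - x') - r/2 \<le> v" using key by blast
    qed
    have "\<bar>set_dist ?A ?B - norm (x - x')\<bar> < r" using le ge r by linarith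
    then show "norm (set_dist ?A ?B - norm (x - x')) < r" by (simp only: real_norm_def)
  qed
qed

theorem theorem3p13:
  fixes X :: "'a::banach itself"
  shows "(LUR X \<longrightarrow>
          (\<forall>x::'a\<in>sphere 0 1. \<forall>x'\<in>sphere 0 1.
             (\<lambda>n. set_dist (Qset (sphere 0 1) x (1 / real n)) (Qset (sphere 0 1) x' (1 / real n)))
               \<longlonglongrightarrow> norm (x - x')))
       \<and> ((\<forall>x::'a\<in>sphere 0 1. \<forall>x'\<in>sphere 0 1.
             (\<lambda>n. set_dist (Qset (sphere 0 1) x (1 / real n)) (Qset (sphere 0 1) x' (1 / real n)))
               \<longlonglongrightarrow> norm (x - x'))
          \<longrightarrow> (\<forall>x::'a\<in>sphere 0 1.
             (\<lambda>n. set_dist (Qset (sphere 0 1) x (1 / real n)) (Qset (sphere 0 1) (-x) (1 / real n)))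
               \<longlonglongrightarrow> 2))"
proof (intro conjI impI ballI)
  fix x x' :: 'a
  assume "LUR X" "x \<in> sphere 0 1" "x' \<in> sphere 0 1"
  then show "(\<lambda>n. set_dist (Qset (sphere 0 1) x (1 / real n)) (Qset (sphere 0 1) x' (1 / real n)))
               \<longlonglongrightarrow> norm (x - x')" by (rule part1)
next
  fix x :: 'a
  assume H: "\<forall>x::'a\<in>sphere 0 1. \<forall>x'\<in>sphere 0 1.
             (\<lambda>n. set_dist (Qset (sphere 0 1) x (1 / real n)) (Qset (sphere 0 1) x' (1 / real n)))
               \<longlonglongrightarrow> norm (x - x')" and x: "x \<in> sphere 0 1"
  have "-x \<in> sphere 0 1" using x by simp
  with H x have "(\<lambda>n. set_dist (Qset (sphere 0 1) x (1 / real n)) (Qset (sphere 0 1) (-x) (1 / real n)))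
               \<longlonglongrightarrow> norm (x - -x)" by blast
  moreover have "norm (x - -x) = 2" using x norm_dbl by simp
  ultimately show "(\<lambda>n. set_dist (Qset (sphere 0 1) x (1 / real n)) (Qset (sphere 0 1) (-x) (1 / real n)))
               \<longlonglongrightarrow> 2" by simp
qed

end
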